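(* There exists an almost discrete Fréchet–Urysohn (Tychonoff) space $Z$ such that $Z\times Z$ is not a weakly Grothendieck space.
   Context: A space is almost discrete if it has exactly one non-isolated point. $C_p(X)$ is the space of continuous real-valued functions on $X$ with the pointwise convergence topology. A space $W$ is a $g$-space if every subset $A\subseteq W$ such that every infinite subset of $A$ has an accumulation point in $W$ has compact closure in $W$; $X$ is weakly Grothendieck if $C_p(X)$ is a $g$-space. *)

theory Defs
  imports "HOL-Analysis.Analysis"
begin

definition almost_discrete :: "'a topology \<Rightarrow> bool" where
  "almost_discrete X \<longleftrightarrow> (\<exists>!p. p \<in> topspace X \<and> \<not> openin X {p})"

definition frechet_urysohn :: "'a topology \<Rightarrow> bool" where
  "frechet_urysohn X \<longleftrightarrow>
     (\<forall>A x. A \<subseteq> topspace X \<and> x \<in> X closure_of A \<longrightarrow>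
        (\<exists>\<sigma>::nat \<Rightarrow> 'a. range \<sigma> \<subseteq> A \<and> limitin X \<sigma> x sequentially))"

definition tychonoff_space :: "'a topology \<Rightarrow> bool" where
  "tychonoff_space X \<longleftrightarrow> completely_regular_space X \<and> t1_space X"

text \<open>C_p(X): continuous real functions on X (extensional, i.e. undefined off topspace X)
  with the topology of pointwise convergence (subspace of the product R^X).\<close>
definition Cp :: "'a topology \<Rightarrow> ('a \<Rightarrow> real) topology" where
  "Cp X = subtopology (product_topology (\<lambda>_. euclideanreal) (topspace X))
            {f. continuous_map X euclideanreal f \<and> f \<in> extensional (topspace X)}"

definition g_space :: "'b topology \<Rightarrow> bool" where
  "g_space W \<longleftrightarrow>
     (\<forall>A. A \<subseteq> topspace W \<and> (\<forall>B. B \<subseteq> A \<and> infinite B \<longrightarrow> W derived_set_of B \<noteq> {})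
          \<longrightarrow> compactin W (W closure_of A))"

definition weakly_grothendieck :: "'a topology \<Rightarrow> bool" where
  "weakly_grothendieck X \<longleftrightarrow> g_space (Cp X)"

end

theory Submission
  imports Defs
begin

locale fanenc =
  fixes pt :: "(nat \<Rightarrow> nat) \<Rightarrow> nat \<Rightarrow> 'a" and p :: 'a
  assumes pt_inj: "pt g m = pt g' m' \<Longrightarrow> g = g' \<and> m = m'"
  and p_not: "pt g m \<noteq> p"
begin

definition "TT = insert p (range (case_prod pt))"
definition "nb f = insert p {pt g m | g m. f g < m}"
definition "isop U \<longleftrightarrow> U \<subseteq> TT \<and> (p \<in> U \<longrightarrow> (\<exists>f. nb f \<subseteq> U))"
definition "Z = topology isop"

lemma nb_sub: "nb f \<subseteq> TT" unfolding nb_def TT_def by auto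

lemma istop: "istopology isop"
  unfolding istopology_def
proof (intro conjI allI impI)
  fix S T assume S: "isop S" and T: "isop T"
  show "isop (S \<inter> T)"
  proof (cases "p \<in> S \<inter> T")
    case True
    then obtain f1 f2 where "nb f1 \<subseteq> S" "nb f2 \<subseteq> T" using S T unfolding isop_def by blast
    then have "nb (\<lambda>g. max (f1 g) (f2 g)) \<subseteq> S \<inter> T" unfolding nb_def by auto
    then show ?thesis using S T unfolding isop_def by blast
  qed (use S T in \<open>auto simp: isop_def\<close>)
next
  fix K assume K: "\<forall>k\<in>K. isop k"
  show "isop (\<Union>K)"
  proof (cases "p \<in> \<Union>K")
    case True
    then obtain k where "k \<in> K" "p \<in> k" by blast
    then obtain f where "nb f \<subseteq> k" using K unfolding isop_def by blast
    then show ?thesis using K \<open>k \<in> K\<close> unfolding isop_def by blast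
  qed (use K in \<open>auto simp: isop_def\<close>)
qed

lemma openZ: "openin Z U \<longleftrightarrow> isop U"
  unfolding Z_def using istop by simp

lemma topZ: "topspace Z = TT"
proof -
  have "isop TT" unfolding isop_def using nb_sub by blast
  then show ?thesis unfolding topspace_def openZ by (auto simp: isop_def)
qed

lemma p_in: "p \<in> TT" by (simp add: TT_def)
lemma pt_in: "pt g m \<in> TT" unfolding TT_def by (metis insertI2 rangeI case_prod_conv)

lemma open_single: "x \<noteq> p \<Longrightarrow> x \<in> TT \<Longrightarrow> openin Z {x}"
  by (auto simp: openZ isop_def)

lemma nb_open: "openin Z (nb f)"
  unfolding openZ isop_def using nb_sub by (auto simp: nb_def)

lemma nb_closed: "closedin Z (nb f)"
proof -
  have "TT - nb f \<subseteq> TT" "p \<notin> TT - nb f" using p_in by (auto simp: nb_def)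
  then show ?thesis unfolding closedin_def topZ openZ isop_def using nb_sub by blast
qed

lemma TT_cases: "x \<in> TT \<Longrightarrow> x = p \<or> (\<exists>g m. x = pt g m)"
  by (auto simp: TT_def)

lemma open_nb: "openin Z U \<Longrightarrow> p \<in> U \<Longrightarrow> \<exists>f. nb f \<subseteq> U"
  by (auto simp: openZ isop_def)

lemma pt_in_nb: "pt g m \<in> nb f \<longleftrightarrow> f g < m"
  unfolding nb_def using pt_inj p_not by (auto)

lemma almost: "almost_discrete Z"
  unfolding almost_discrete_def
proof (rule ex1I[of _ p])
  show "p \<in> topspace Z \<and> \<not> openin Z {p}"
  proof
    show "p \<in> topspace Z" by (simp add: topZ p_in)
    show "\<not> openin Z {p}"
    proof
      assume "openin Z {p}"
      then obtain f where "nb f \<subseteq> {p}" using open_nb by blast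
      moreover have "pt (\<lambda>_. 0) (Suc (f (\<lambda>_. 0))) \<in> nb f" by (simp add: pt_in_nb)
      ultimately show False using p_not by blast
    qed
  qed
  fix y assume "y \<in> topspace Z \<and> \<not> openin Z {y}"
  then show "y = p" using open_single topZ by auto
qed

lemma t1: "t1_space Z"
  unfolding t1_space_def topZ
proof (intro ballI impI)
  fix x y assume x: "x \<in> TT" and y: "y \<in> TT" and xy: "x \<noteq> y"
  show "\<exists>U. openin Z U \<and> x \<in> U \<and> y \<notin> U"
  proof (cases "x = p")
    case False
    then show ?thesis using open_single[OF False x] xy by blast
  next
    case True
    then obtain g m where yg: "y = pt g m" using y xy TT_cases by blast
    have "y \<notin> nb (\<lambda>_. m)" using yg pt_in_nb by simp
    moreover have "p \<in> nb (\<lambda>_. m)" by (simp add: nb_def)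
    ultimately show ?thesis using True nb_open by blast
  qed
qed

lemma clopen_indicator:
  assumes "openin X U" "closedin X U"
  shows "continuous_map X euclideanreal (\<lambda>x. if x \<in> U then a else b)"
  using assms apply (clarsimp simp: continuous_map_def closedin_def)
  by (smt (verit) Diff_iff mem_Collect_eq openin_subopen subset_eq)

lemma creg: "completely_regular_space Z"
  unfolding completely_regular_space_def
proof (intro allI impI)
  fix S x assume a: "closedin Z S \<and> x \<in> topspace Z - S"
  have "\<exists>U. openin Z U \<and> closedin Z U \<and> x \<in> U \<and> U \<inter> S = {}"
  proof (cases "x = p")
    case True
    have "openin Z (topspace Z - S)" using a by blast
    then obtain f where "nb f \<subseteq> topspace Z - S" using True a open_nb by blast
    moreover have "p \<in> nb f" by (simp add: nb_def)
    ultimately show ?thesis using nb_open nb_closed True by blast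
  next
    case False
    have "closedin Z {x}" using t1 a by (simp add: t1_space_closedin_singleton)
    then show ?thesis using open_single[OF False] a topZ by auto
  qed
  then obtain U where U: "openin Z U" "closedin Z U" "x \<in> U" "U \<inter> S = {}" by blast
  have "continuous_map Z euclideanreal (\<lambda>y. if y \<in> U then 0 else 1)"
    by (rule clopen_indicator[OF U(1,2)])
  then have "continuous_map Z (top_of_set {0::real..1}) (\<lambda>y. if y \<in> U then 0 else 1)"
    by (auto simp: continuous_map_in_subtopology)
  then show "\<exists>f::'a\<Rightarrow>real. continuous_map Z (top_of_set {0..1}) f \<and> f x = 0 \<and> f ` S \<subseteq> {1}"
    using U by (intro exI[of _ "\<lambda>y. if y \<in> U then 0 else 1"]) auto
qed

lemma tych: "tychonoff_space Z"
  by (simp add: tychonoff_space_def creg t1)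


lemma frechet: "frechet_urysohn Z"
  unfolding frechet_urysohn_def
proof (intro allI impI)
  fix A x assume a: "A \<subseteq> topspace Z \<and> x \<in> Z closure_of A"
  then have xT: "x \<in> TT" using a by (metis closure_of_subset_topspace subsetD topZ)
  show "\<exists>\<sigma>::nat \<Rightarrow> 'a. range \<sigma> \<subseteq> A \<and> limitin Z \<sigma> x sequentially"
  proof (cases "x \<in> A")
    case True
    then show ?thesis by (intro exI[of _ "\<lambda>_. x"]) (auto simp: limitin_def topZ xT)
  next
    case False
    have xp: "x = p"
    proof (rule ccontr)
      assume "x \<noteq> p"
      then have "openin Z {x}" using open_single xT by blast
      then show False using a False unfolding in_closure_of by (metis singletonD singletonI)
    qed
    have "\<exists>g. infinite {m. pt g m \<in> A}"
    proof (rule ccontr)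
      assume "\<not> ?thesis"
      then have fin: "\<And>g. finite {m. pt g m \<in> A}" by blast
      define f where "f g = Max {m. pt g m \<in> A}" for g
      have pn: "p \<in> nb f" by (simp add: nb_def)
      have "\<exists>y. y \<in> A \<and> y \<in> nb f" using a xp nb_open[of f] pn unfolding in_closure_of
        by blast
      then obtain y where y: "y \<in> A" "y \<in> nb f" by blast
      then have "y \<noteq> p" using False xp by blast
      then obtain g m where ym: "y = pt g m" using y(2) unfolding nb_def by auto
      then have "f g < m" using y(2) pt_in_nb by simp
      moreover have "m \<le> f g" unfolding f_def using fin[of g] y(1) ym by (intro Max_ge) auto
      ultimately show False by simp
    qed
    then obtain g where inf: "infinite {m. pt g m \<in> A}" by blast
    define M where "M = {m. pt g m \<in> A}"
    have inf: "infinite M" using inf M_def by simp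
    show ?thesis
    proof (intro exI[of _ "\<lambda>n. pt g (enumerate M n)"] conjI)
      show "range (\<lambda>n. pt g (enumerate M n)) \<subseteq> A"
        using enumerate_in_set[OF inf] M_def by auto
      show "limitin Z (\<lambda>n. pt g (enumerate M n)) x sequentially"
        unfolding limitin_def
      proof (intro conjI allI impI)
        show "x \<in> topspace Z" using xT topZ by simp
        fix U assume "openin Z U \<and> x \<in> U"
        then obtain f where f: "nb f \<subseteq> U" using open_nb xp by blast
        have "\<forall>n\<ge>Suc (f g). pt g (enumerate M n) \<in> U"
        proof (intro allI impI)
          fix n assume "Suc (f g) \<le> n"
          then have "f g < enumerate M n" using le_enumerate[OF inf, of n] by simp
          then show "pt g (enumerate M n) \<in> U" using f pt_in_nb by blast
        qed
        then show "\<forall>\<^sub>F n in sequentially. pt g (enumerate M n) \<in> U"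
          unfolding eventually_sequentially by blast
      qed
    qed
  qed
qed


definition "X = prod_topology Z Z"
definition "SS = {(pt (\<lambda>_. i) (g i), pt g i) | i g. True}"
definition chi :: "('a \<times> 'a) set \<Rightarrow> 'a \<times> 'a \<Rightarrow> real" where
  "chi F = (\<lambda>x. if x \<in> TT \<times> TT then (if x \<in> F then 1 else 0) else undefined)"

lemma topX: "topspace X = TT \<times> TT" by (simp add: X_def topZ)

lemma SS_sub: "SS \<subseteq> TT \<times> TT" unfolding SS_def using pt_in by auto

lemma SS_iff: "(pt a b, pt g i) \<in> SS \<longleftrightarrow> a = (\<lambda>_. i) \<and> b = g i"
proof
  assume "(pt a b, pt g i) \<in> SS"
  then obtain i' g' where e: "pt a b = pt (\<lambda>_. i') (g' i')" "pt g i = pt g' i'" unfolding SS_def by blast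
  from pt_inj[OF e(1)] pt_inj[OF e(2)] show "a = (\<lambda>_. i) \<and> b = g i" by simp
qed (auto simp: SS_def)

lemma single_open: "(x, y) \<in> SS \<Longrightarrow> openin X {(x,y)}"
proof -
  assume "(x, y) \<in> SS"
  then obtain i g where "x = pt (\<lambda>_. i) (g i)" "y = pt g i" unfolding SS_def by blast
  then have "openin Z {x}" "openin Z {y}" using open_single[OF p_not pt_in] by simp_all
  then have "openin X ({x} \<times> {y})" unfolding X_def using openin_prod_Times_iff[of Z Z "{x}" "{y}"] by blast
  then show ?thesis by simp
qed

lemma SS_open: "T0 \<subseteq> SS \<Longrightarrow> openin X T0"
proof -
  assume a: "T0 \<subseteq> SS"
  have "\<forall>q\<in>T0. \<exists>T. openin X T \<and> q \<in> T \<and> T \<subseteq> T0"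
  proof
    fix q assume "q \<in> T0"
    then show "\<exists>T. openin X T \<and> q \<in> T \<and> T \<subseteq> T0"
      using a single_open[of "fst q" "snd q"] by (intro exI[of _ "{q}"]) auto
  qed
  then show ?thesis using openin_subopen by metis
qed

lemma box:
  assumes "openin Z U" "openin Z V" "x \<in> U" "y \<in> V" "\<And>u v. u \<in> U \<Longrightarrow> v \<in> V \<Longrightarrow> (u,v) \<notin> T0"
  shows "\<exists>U V. openin Z U \<and> openin Z V \<and> x \<in> U \<and> y \<in> V \<and> U \<times> V \<subseteq> topspace (prod_topology Z Z) - T0"
proof -
  have "U \<times> V \<subseteq> topspace (prod_topology Z Z) - T0"
    using assms(1,2,5) openin_subset[of Z U] openin_subset[of Z V] by auto
  then show ?thesis using assms(1-4) by blast
qed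

lemma SS_closed:
  assumes T0: "T0 \<subseteq> SS" "countable T0"
  shows "closedin X T0"
  unfolding closedin_def
proof
  show "T0 \<subseteq> topspace X" using T0 SS_sub topX by auto
  show "openin X (topspace X - T0)"
    unfolding X_def openin_prod_topology_alt
  proof (intro allI impI)
    fix x y assume xy: "(x, y) \<in> topspace (prod_topology Z Z) - T0"
    then have xT: "x \<in> TT" and yT: "y \<in> TT" and nT: "(x,y) \<notin> T0" by (auto simp: topZ)
    show "\<exists>U V. openin Z U \<and> openin Z V \<and> x \<in> U \<and> y \<in> V \<and> U \<times> V \<subseteq> topspace (prod_topology Z Z) - T0"
    proof (cases "x = p")
      case xp: True
      show ?thesis
      proof (cases "y = p")
        case yp: True
        define G where "G = {g. \<exists>i. (pt (\<lambda>_. i) (g i), pt g i) \<in> T0}"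
        define gdec where "gdec z = (SOME g. \<exists>m. z = pt g m)" for z
        have gdec: "gdec (pt g m) = g" for g m
          unfolding gdec_def by (rule some_equality) (auto dest: pt_inj)
        have "G \<subseteq> (\<lambda>q. gdec (snd q)) ` T0" unfolding G_def
        proof
          fix g assume "g \<in> {g. \<exists>i. (pt (\<lambda>_. i) (g i), pt g i) \<in> T0}"
          then obtain i where "(pt (\<lambda>_. i) (g i), pt g i) \<in> T0" by blast
          moreover have "g = gdec (snd (pt (\<lambda>_. i) (g i), pt g i))" by (simp add: gdec)
          ultimately show "g \<in> (\<lambda>q. gdec (snd q)) ` T0" by blast
        qed
        then have cG: "countable G" using T0(2) countable_subset by blast
        show ?thesis
        proof (cases "G = {}")
          case True
          then have "T0 = {}" using T0(1) unfolding G_def SS_def by blast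
          then show ?thesis using xy xp yp nb_open[of "\<lambda>_. 0"] nb_sub[of "\<lambda>_. 0"]
            by (intro box[of "nb (\<lambda>_. 0)" "nb (\<lambda>_. 0)"]) (auto simp: nb_def)
        next
          case False
          define gs where "gs = from_nat_into G"
          have rg: "range gs = G" using False cG gs_def by simp
          define h where "h a = Max ((\<lambda>k. gs k (a 0)) ` {..a 0})" for a :: "nat \<Rightarrow> nat"
          define f where "f g = (SOME k. gs k = g)" for g
          have disj: "(u, v) \<notin> T0" if "u \<in> nb h" "v \<in> nb f" for u v
          proof
            assume uv: "(u, v) \<in> T0"
            then obtain i g where ug: "u = pt (\<lambda>_. i) (g i)" "v = pt g i" using T0(1) unfolding SS_def by blast
            then have "g \<in> G" using uv unfolding G_def by blast
            then have fk: "gs (f g) = g" unfolding f_def using rg by (metis (mono_tags) rangeE someI)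
            have "h (\<lambda>_. i) < g i" using that(1) ug pt_in_nb by simp
            moreover have "f g < i" using that(2) ug pt_in_nb by simp
            moreover have "gs (f g) i \<le> h (\<lambda>_. i)" if "f g \<le> i"
              unfolding h_def using that by (intro Max_ge) auto
            ultimately show False using fk by simp
          qed
          have "p \<in> nb h" "p \<in> nb f" by (auto simp: nb_def)
          then show ?thesis using disj xp yp nb_open nb_sub
            by (intro box[of "nb h" "nb f"]) auto
        qed
      next
        case False
        then obtain g m where ym: "y = pt g m" using yT TT_cases by blast
        have disj: "(u, y) \<notin> T0" if "u \<in> nb (\<lambda>_. g m)" for u
        proof
          assume uv: "(u, y) \<in> T0"
          then obtain i g' where ug: "u = pt (\<lambda>_. i) (g' i)" "y = pt g' i" using T0(1) unfolding SS_def by blast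
          then have "g' = g" "i = m" using ym pt_inj by auto
          then show False using that ug pt_in_nb by simp
        qed
        have "p \<in> nb (\<lambda>_. g m)" by (auto simp: nb_def)
        then show ?thesis using disj xp nb_open nb_sub open_single[OF False yT] yT
          by (intro box[of "nb (\<lambda>_. g m)" "{y}"]) auto
      qed
    next
      case False
      then obtain a b where xa: "x = pt a b" using xT TT_cases by blast
      show ?thesis
      proof (cases "y = p")
        case yp: True
        have disj: "(x, v) \<notin> T0" if "v \<in> nb (\<lambda>_. a 0)" for v
        proof
          assume uv: "(x, v) \<in> T0"
          then obtain i g where ug: "x = pt (\<lambda>_. i) (g i)" "v = pt g i" using T0(1) unfolding SS_def by blast
          then have "a = (\<lambda>_. i)" using xa pt_inj by blast
          then show False using that ug pt_in_nb by simp
        qed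
        have "p \<in> nb (\<lambda>_. a 0)" by (auto simp: nb_def)
        then show ?thesis using disj yp nb_open nb_sub open_single[OF False xT] xT
          by (intro box[of "{x}" "nb (\<lambda>_. a 0)"]) auto
      next
        case yp: False
        show ?thesis using open_single[OF False xT] open_single[OF yp yT] xT yT nT
          by (intro box[of "{x}" "{y}"]) auto
      qed
    qed
  qed
qed


lemma MARK1: True by simp

abbreviation "CX \<equiv> {f. continuous_map X euclideanreal f \<and> f \<in> extensional (topspace X)}"

lemma Cp_X: "Cp X = subtopology (product_topology (\<lambda>_. euclideanreal) (TT \<times> TT)) CX"
  unfolding Cp_def topX ..

lemma chi_ext: "chi F \<in> extensional (TT \<times> TT)"
  unfolding chi_def extensional_def by auto

lemma chi_cont:
  assumes "F \<subseteq> SS" "countable F"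
  shows "continuous_map X euclideanreal (chi F)"
proof -
  have c: "continuous_map X euclideanreal (\<lambda>x. if x \<in> F then 1 else 0)"
    using clopen_indicator SS_open SS_closed assms by blast
  show ?thesis
    by (rule continuous_map_eq[OF c]) (auto simp: chi_def topX)
qed

lemma chi_top:
  assumes "F \<subseteq> SS" "countable F"
  shows "chi F \<in> topspace (Cp X)"
  using chi_cont[OF assms] chi_ext unfolding Cp_X topspace_subtopology
  by (auto simp: topX chi_def PiE_iff)

lemma pp_closure: "(p, p) \<in> X closure_of SS"
  unfolding in_closure_of
proof (intro conjI allI impI)
  show "(p, p) \<in> topspace X" by (simp add: topX p_in)
  fix T assume T: "(p, p) \<in> T \<and> openin X T"
  then obtain U V where UV: "openin Z U" "openin Z V" "p \<in> U" "p \<in> V" "U \<times> V \<subseteq> T"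
    unfolding X_def openin_prod_topology_alt by blast
  obtain h f where hf: "nb h \<subseteq> U" "nb f \<subseteq> V" using UV open_nb by metis
  define g where "g i = Suc (h (\<lambda>_. i))" for i
  define i where "i = Suc (f g)"
  have "pt (\<lambda>_. i) (g i) \<in> nb h" "pt g i \<in> nb f" by (auto simp: pt_in_nb g_def i_def)
  then have "(pt (\<lambda>_. i) (g i), pt g i) \<in> T" using hf UV by blast
  moreover have "(pt (\<lambda>_. i) (g i), pt g i) \<in> SS" by (simp add: SS_iff)
  ultimately show "\<exists>y. y \<in> SS \<and> y \<in> T" by blast
qed

lemma chiS_not_cont: "\<not> continuous_map X euclideanreal (chi SS)"
proof
  assume c: "continuous_map X euclideanreal (chi SS)"
  have "closedin X {x \<in> topspace X. chi SS x \<in> {1}}"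
    by (rule closedin_continuous_map_preimage[OF c]) simp
  moreover have "{x \<in> topspace X. chi SS x \<in> {1}} = SS"
    using SS_sub by (auto simp: chi_def topX)
  ultimately have "closedin X SS" by simp
  then have "(p, p) \<in> SS" using pp_closure closure_of_closedin by blast
  then show False unfolding SS_def using p_not by blast
qed

lemma MARK2: True by simp

definition "AA = chi ` {F. finite F \<and> F \<subseteq> SS}"

lemma AA_top: "AA \<subseteq> topspace (Cp X)"
  unfolding AA_def by (auto intro!: chi_top countable_finite)

lemma chiS_closure: "chi SS \<in> (product_topology (\<lambda>_. euclideanreal) (TT \<times> TT)) closure_of AA"
  unfolding in_closure_of
proof (intro conjI allI impI)
  show "chi SS \<in> topspace (product_topology (\<lambda>_. euclideanreal) (TT \<times> TT))"
    using chi_ext by (auto simp: PiE_iff)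
  fix T assume T: "chi SS \<in> T \<and> openin (product_topology (\<lambda>_. euclideanreal) (TT \<times> TT)) T"
  then obtain Xs where Xs: "chi SS \<in> (\<Pi>\<^sub>E i\<in>TT \<times> TT. Xs i)" "finite {i. Xs i \<noteq> topspace euclideanreal}"
     "(\<Pi>\<^sub>E i\<in>TT \<times> TT. Xs i) \<subseteq> T"
    using product_topology_open_contains_basis[of "\<lambda>_. euclideanreal" "TT \<times> TT" T "chi SS"] by blast
  define F where "F = {i. Xs i \<noteq> UNIV} \<inter> SS"
  have F: "finite F" "F \<subseteq> SS" using Xs(2) by (auto simp: F_def)
  have "chi F \<in> (\<Pi>\<^sub>E i\<in>TT \<times> TT. Xs i)"
  proof -
    have "chi F i \<in> Xs i" if "i \<in> TT \<times> TT" for i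
    proof (cases "Xs i = UNIV")
      case False
      then have "chi F i = chi SS i" by (auto simp: chi_def F_def)
      then show ?thesis using Xs(1) that by (auto simp: PiE_iff)
    qed simp
    then show ?thesis using chi_ext by (auto simp: PiE_iff)
  qed
  then show "\<exists>y. y \<in> AA \<and> y \<in> T" using Xs(3) F unfolding AA_def by blast
qed

lemma not_compact: "\<not> compactin (Cp X) ((Cp X) closure_of AA)"
proof
  let ?P = "product_topology (\<lambda>_::'a\<times>'a. euclideanreal) (TT \<times> TT)"
  assume "compactin (Cp X) ((Cp X) closure_of AA)"
  then have K: "compactin ?P ((Cp X) closure_of AA)" "(Cp X) closure_of AA \<subseteq> CX"
    unfolding Cp_X compactin_subtopology by auto
  have "Hausdorff_space ?P" by (simp add: Hausdorff_space_product_topology)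
  then have "closedin ?P ((Cp X) closure_of AA)" using K(1) compactin_imp_closedin by blast
  moreover have "AA \<subseteq> (Cp X) closure_of AA" using AA_top closure_of_subset by blast
  ultimately have "?P closure_of AA \<subseteq> (Cp X) closure_of AA" by (rule closure_of_minimal[rotated])
  then have "chi SS \<in> CX" using chiS_closure K(2) by blast
  then show False using chiS_not_cont by blast
qed


lemma MARK3: True by simp

lemma AA_chi: "h \<in> AA \<Longrightarrow> \<exists>F. finite F \<and> F \<subseteq> SS \<and> h = chi F"
  unfolding AA_def by blast

lemma AA_acc:
  assumes B: "B \<subseteq> AA" "infinite B"
  shows "(Cp X) derived_set_of B \<noteq> {}"
proof -
  let ?P = "product_topology (\<lambda>_::'a\<times>'a. euclideanreal) (TT \<times> TT)"
  obtain C where C: "C \<subseteq> B" "countable C" "infinite C" using infinite_countable_subset'[OF B(2)] by blast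
  define Fs where "Fs h = (SOME F. finite F \<and> F \<subseteq> SS \<and> h = chi F)" for h
  have Fs: "finite (Fs h) \<and> Fs h \<subseteq> SS \<and> h = chi (Fs h)" if "h \<in> C" for h
    unfolding Fs_def using AA_chi[of h] that C(1) B(1) by (metis (mono_tags, lifting) someI_ex subsetD)
  define E where "E = (\<Union>h\<in>C. Fs h)"
  have E: "countable E" "E \<subseteq> SS" unfolding E_def using C(2) Fs by (auto intro: countable_finite)
  define Q where "Q = (\<Pi>\<^sub>E x\<in>TT \<times> TT. if x \<in> E then {0,1::real} else {0})"
  have "compactin ?P Q" unfolding Q_def compactin_PiE
    by (rule disjI2) (auto intro: finite_imp_compactin)
  moreover have CQ: "C \<subseteq> Q"
  proof
    fix h assume h: "h \<in> C"
    then have e: "h = chi (Fs h)" and sub: "Fs h \<subseteq> E" using Fs unfolding E_def by auto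
    have "chi (Fs h) \<in> Q" using sub unfolding Q_def chi_def by (auto simp: PiE_iff extensional_def)
    then show "h \<in> Q" using e by simp
  qed
  ultimately have "Q \<inter> ?P derived_set_of C \<noteq> {}" using C(3) compactin_imp_Bolzano_Weierstrass by blast
  then obtain f where f: "f \<in> Q" "f \<in> ?P derived_set_of C" by blast
  define T0 where "T0 = {x \<in> E. f x = 1}"
  have T0: "countable T0" "T0 \<subseteq> SS" using E by (auto simp: T0_def intro: countable_subset)
  have "f = chi T0"
  proof
    fix x
    have a1: "x \<in> TT \<times> TT \<Longrightarrow> f x \<in> (if x \<in> E then {0,1} else {0})"
      using f(1) unfolding Q_def by (rule PiE_mem)
    have a2: "x \<notin> TT \<times> TT \<Longrightarrow> f x = undefined"
      using f(1) unfolding Q_def by (rule PiE_arb)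
    have a3: "x \<in> E \<Longrightarrow> x \<in> TT \<times> TT" using E(2) SS_sub by blast
    show "f x = chi T0 x"
    proof (cases "x \<in> TT \<times> TT")
      case True
      then show ?thesis using a1 unfolding chi_def T0_def by (cases "x \<in> E") auto
    next
      case False
      then show ?thesis using a2 unfolding chi_def by simp
    qed
  qed
  then have ftop: "f \<in> topspace (Cp X)" using chi_top[OF T0(2,1)] by simp
  then have fC: "f \<in> CX" unfolding Cp_X by simp
  have BC: "B \<subseteq> CX" using B(1) AA_top unfolding Cp_X by auto
  have "f \<in> ?P derived_set_of B" using f(2) derived_set_of_mono[OF C(1)] by blast
  then have "f \<in> (Cp X) derived_set_of B"
    unfolding Cp_X derived_set_of_subtopology using fC BC by (simp add: Int_absorb1)
  then show ?thesis by blast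
qed

lemma notWG: "\<not> weakly_grothendieck X"
  unfolding weakly_grothendieck_def g_space_def
proof
  assume H: "\<forall>A. A \<subseteq> topspace (Cp X) \<and> (\<forall>B. B \<subseteq> A \<and> infinite B \<longrightarrow> Cp X derived_set_of B \<noteq> {})
          \<longrightarrow> compactin (Cp X) (Cp X closure_of A)"
  have "compactin (Cp X) (Cp X closure_of AA)"
    using H AA_top AA_acc by blast
  then show False using not_compact by blast
qed

end

definition ptR :: "(nat \<Rightarrow> nat) \<Rightarrow> nat \<Rightarrow> real set" where
  "ptR g m = insert (-1 - real m) (range (\<lambda>n. real (prod_encode (n, g n))))"

lemma ptR_inj: "ptR g m = ptR g' m' \<Longrightarrow> g = g' \<and> m = m'"
proof -
  assume eq: "ptR g m = ptR g' m'"
  have "-1 - real m \<in> ptR g m" by (simp add: ptR_def)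
  then have "-1 - real m \<in> ptR g' m'" using eq by simp
  then have "-1 - real m = -1 - real m' \<or> (\<exists>n. -1 - real m = real (prod_encode (n, g' n)))"
    unfolding ptR_def by blast
  moreover have "-1 - real m \<noteq> real k" for k :: nat by simp
  ultimately have m: "m = m'" by auto
  have "g n = g' n" for n
  proof -
    have "real (prod_encode (n, g n)) \<in> ptR g m" by (simp add: ptR_def)
    then have "real (prod_encode (n, g n)) \<in> ptR g' m'" using eq by simp
    moreover have "real (prod_encode (n, g n)) \<noteq> -1 - real m'" by simp
    ultimately obtain n' where "real (prod_encode (n, g n)) = real (prod_encode (n', g' n'))"
      unfolding ptR_def by auto
    then have "prod_encode (n, g n) = prod_encode (n', g' n')" by (rule of_nat_eq_iff[THEN iffD1])
    then have "(n, g n) = (n', g' n')" by (rule prod_encode_eq[THEN iffD1])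
    then have nn: "n = n'" and gg: "g n = g' n'" by auto
    from gg show ?thesis unfolding nn .
  qed
  then show ?thesis using m by auto
qed

interpretation R: fanenc ptR "{}"
proof
  show "ptR g m = ptR g' m' \<Longrightarrow> g = g' \<and> m = m'" for g m g' m' by (rule ptR_inj)
  show "ptR g m \<noteq> {}" for g m by (simp add: ptR_def)
qed

theorem mainTheorem7:
  shows "\<exists>Z :: real set topology.
           almost_discrete Z \<and> frechet_urysohn Z \<and> tychonoff_space Z \<and>
           \<not> weakly_grothendieck (prod_topology Z Z)"
  using R.almost R.frechet R.tych R.notWG unfolding R.X_def by blast

end
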